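(* Let $D_{d,k}$ be a partial DCell, and let $\alpha'=\alpha_k\cdots\alpha_{l+2}$ with $3\le l+2\le k$. If $m$ is the largest integer such that $D_{d,l}^{\alpha'm}$ is non-empty, then $D_{d,l}^{\alpha'i}$ and $D_{d,l}^{\alpha'j}$ are linked for all $i,j$ with $0\le i<j<m$, and $D_{d,l}^{\alpha'm}$ is linked to at least $\min\{m,t_1\}$ of the sub-partial $DCell_l$s $D_{d,l}^{\alpha'i}$.
   Context: DCell with parameter $n\ge2$: $DCell_0=D_0=K_n$, $t_0=n$; for $j\ge1$, $D_j$ consists of $t_{j-1}+1$ vertex-disjoint copies $D_{j-1}^0,\dots,D_{j-1}^{t_{j-1}}$ of $D_{j-1}$ plus level $j$ edges, and $t_j=t_{j-1}(t_{j-1}+1)$ (so $t_1=n(n+1)$). A vertex of $D_k$ has label $(\alpha_k,\dots,\alpha_1,\alpha_0)$, where $\alpha_j\in\{0,\dots,t_{j-1}\}$ is the index of the copy of $D_{j-1}$ inside the containing $D_j$ and $\alpha_0\in\{0,\dots,n-1\}$; $uid_{j}=\alpha_0+\sum_{l=1}^{j}\alpha_l t_{l-1}$. For $a<b$, the vertex with $uid_{j-1}=b-1$ in $D_{j-1}^a$ is joined to the vertex with $uid_{j-1}=a$ in $D_{j-1}^b$. Enumeration: for $k\ge2$ put $a_i=t_{i-1}+1$ ($2\le i\le k$), $A=[a_k]\times\cdots\times[a_2]$ with $[a]=\{0,\dots,a-1\}$; $\alpha=\alpha_k\cdots\alpha_2\in A$ identifies the copy of $DCell_1$ consisting of the vertices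 with labels $(\alpha_k,\dots,\alpha_2,\cdot,\cdot)$. Prefixes of $\alpha$ are $\alpha_k\cdots\alpha_{l+1}$ ($2\le l+1\le k$), $\varnothing$ is the empty prefix, and $\beta i$ denotes appending $i$. An array $\phi:A\to\{0,1\}$ starts at $0$; a tuple $\beta$ is non-empty if some $\alpha$ with prefix (or equal to) $\beta$ has $\phi(\alpha)=1$, empty otherwise, full if all such $\alpha$ have $\phi(\alpha)=1$. Next$(\beta)$, $\beta=\alpha_k\cdots\alpha_{l+1}$ ($l=k$ if $\beta=\varnothing$): let $m$ be the least $i$ with $\beta i$ empty; if $l=2$ set $\phi(\beta m):=1$ and stop; otherwise if $m\ge a_2$ replace $m$ by the least $i$ with $\beta i$ not full; then call Next$(\beta m)$. The partial DCell $D_{d,k}$ is the subgraph of $DCell_k$ induced by the vertices of the $DCell_1$s $\alpha$ with $\phi(\alpha)=1$ after $d$ calls of Next$(\varnothing)$. For a tuple $\beta=\alpha_k\cdots\alpha_{l+1}$, the sub-partial $DCell_l$ $D_{d,l}^{\beta}$ is the subgraph of $D_{d,k}$ induced by its vertices whose labels begin with $\beta$ (possibly empty). Two such subgraphs are linked if some edge of $D_{d,k}$ joins a vertex of one to a vertex of the other. *)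

theory Defs
  imports Main "HOL-Library.Sublist"
begin

primrec dc_t :: "nat \<Rightarrow> nat \<Rightarrow> nat" where
  "dc_t n 0 = n"
| "dc_t n (Suc j) = dc_t n j * (dc_t n j + 1)"

(* A vertex label (alpha_k,...,alpha_0) of DCell_k is represented as a function
   x :: nat => nat with x j = alpha_j for j <= k and x j = 0 for j > k. *)
definition dc_vertex :: "nat \<Rightarrow> nat \<Rightarrow> (nat \<Rightarrow> nat) \<Rightarrow> bool" where
  "dc_vertex n k x \<longleftrightarrow> x 0 < n \<and> (\<forall>j\<in>{1..k}. x j \<le> dc_t n (j - 1)) \<and> (\<forall>j>k. x j = 0)"

definition dc_uid :: "nat \<Rightarrow> nat \<Rightarrow> (nat \<Rightarrow> nat) \<Rightarrow> nat" where
  "dc_uid n j x = x 0 + (\<Sum>l=1..j. x l * dc_t n (l - 1))"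

(* Edges of DCell_k: level-0 edges (complete graph K_n inside a DCell_0) and
   level-j edges (j >= 1) inside a common DCell_j between copies a < b of DCell_{j-1}. *)
definition dc_edge :: "nat \<Rightarrow> nat \<Rightarrow> (nat \<Rightarrow> nat) \<Rightarrow> (nat \<Rightarrow> nat) \<Rightarrow> bool" where
  "dc_edge n k u v \<longleftrightarrow> dc_vertex n k u \<and> dc_vertex n k v \<and>
     (\<exists>j\<le>k. (\<forall>i>j. u i = v i) \<and>
        (if j = 0 then u 0 \<noteq> v 0
         else (u j < v j \<and> dc_uid n (j - 1) u = v j - 1 \<and> dc_uid n (j - 1) v = u j)
            \<or> (v j < u j \<and> dc_uid n (j - 1) v = u j - 1 \<and> dc_uid n (j - 1) u = v j)))"

(* The index set A = [a_k] x ... x [a_2], a_i = t_{i-1} + 1; a tuple alpha_k ... alpha_2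
   is the list [alpha_k, ..., alpha_2] (entry p is alpha_{k-p}). *)
definition dc_A :: "nat \<Rightarrow> nat \<Rightarrow> nat list set" where
  "dc_A n k = {\<alpha>. length \<alpha> = k - 1 \<and> (\<forall>p<k - 1. \<alpha> ! p < dc_t n (k - p - 1) + 1)}"

(* phi is represented by the set S of tuples alpha with phi(alpha) = 1 *)
definition tup_empty :: "nat list set \<Rightarrow> nat list \<Rightarrow> bool" where
  "tup_empty S \<beta> \<longleftrightarrow> \<not> (\<exists>\<alpha>\<in>S. prefix \<beta> \<alpha>)"

definition tup_full :: "nat \<Rightarrow> nat \<Rightarrow> nat list set \<Rightarrow> nat list \<Rightarrow> bool" where
  "tup_full n k S \<beta> \<longleftrightarrow> (\<forall>\<alpha>\<in>dc_A n k. prefix \<beta> \<alpha> \<longrightarrow> \<alpha> \<in> S)"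

(* Next(beta) where the fuel f = l - 2 for beta = alpha_k ... alpha_{l+1} *)
primrec next_aux :: "nat \<Rightarrow> nat \<Rightarrow> nat \<Rightarrow> nat list \<Rightarrow> nat list set \<Rightarrow> nat list set" where
  "next_aux n k 0 \<beta> S = insert (\<beta> @ [LEAST i. tup_empty S (\<beta> @ [i])]) S"
| "next_aux n k (Suc f) \<beta> S =
     (let m = (LEAST i. tup_empty S (\<beta> @ [i]));
          m' = (if m \<ge> dc_t n 1 + 1 then (LEAST i. \<not> tup_full n k S (\<beta> @ [i])) else m)
      in next_aux n k f (\<beta> @ [m']) S)"

definition dc_next :: "nat \<Rightarrow> nat \<Rightarrow> nat list set \<Rightarrow> nat list set" where
  "dc_next n k S = next_aux n k (k - 2) [] S"

definition dc_phi :: "nat \<Rightarrow> nat \<Rightarrow> nat \<Rightarrow> nat list set" where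
  "dc_phi n k d = (dc_next n k ^^ d) {}"

definition dc_tuple :: "nat \<Rightarrow> (nat \<Rightarrow> nat) \<Rightarrow> nat list" where
  "dc_tuple k x = map (\<lambda>p. x (k - p)) [0..<k - 1]"

definition pdc_vertices :: "nat \<Rightarrow> nat \<Rightarrow> nat \<Rightarrow> (nat \<Rightarrow> nat) set" where
  "pdc_vertices n k d = {x. dc_vertex n k x \<and> dc_tuple k x \<in> dc_phi n k d}"

definition sub_vertices :: "nat \<Rightarrow> nat \<Rightarrow> nat \<Rightarrow> nat list \<Rightarrow> (nat \<Rightarrow> nat) set" where
  "sub_vertices n k d \<beta> = {x \<in> pdc_vertices n k d.
      \<beta> = map (\<lambda>p. x (k - p)) [0..<length \<beta>]}"

definition linked :: "nat \<Rightarrow> nat \<Rightarrow> nat \<Rightarrow> nat list \<Rightarrow> nat list \<Rightarrow> bool" where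
  "linked n k d \<beta> \<gamma> \<longleftrightarrow> (\<exists>u\<in>sub_vertices n k d \<beta>. \<exists>v\<in>sub_vertices n k d \<gamma>. dc_edge n k u v)"

end

theory Submission
  imports Defs
begin


lemma dc_t_mono: "i \<le> j \<Longrightarrow> dc_t n i \<le> dc_t n j"
proof (induction j)
  case 0 then show ?case by simp
next
  case (Suc j)
  have "dc_t n j \<le> dc_t n (Suc j)" by simp
  then show ?case using Suc by (cases "i = Suc j") auto
qed

lemma prefix_nth_eq: "prefix \<gamma> \<alpha> \<Longrightarrow> p < length \<gamma> \<Longrightarrow> \<alpha> ! p = \<gamma> ! p"
  by (auto simp: prefix_def nth_append)

definition zext :: "nat \<Rightarrow> nat list \<Rightarrow> nat list" where
  "zext k \<beta> = \<beta> @ replicate (k - 1 - length \<beta>) 0"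

lemma zext_in:
  assumes "length \<gamma> \<le> k - 1" "\<forall>p<length \<gamma>. \<gamma>!p < dc_t n (k-p-1) + 1"
  shows "zext k \<gamma> \<in> dc_A n k"
  using assms by (auto simp: zext_def dc_A_def nth_append)

lemma zext_prefix: "prefix \<gamma> (zext k \<gamma>)"
  by (simp add: zext_def)

lemma inrange:
  "(\<exists>\<alpha>\<in>dc_A n k. prefix \<gamma> \<alpha>) \<longleftrightarrow> length \<gamma> \<le> k - 1 \<and> (\<forall>p<length \<gamma>. \<gamma>!p < dc_t n (k-p-1) + 1)"
proof
  assume "\<exists>\<alpha>\<in>dc_A n k. prefix \<gamma> \<alpha>"
  then obtain \<alpha> where a: "\<alpha> \<in> dc_A n k" "prefix \<gamma> \<alpha>" by blast
  have "length \<gamma> \<le> length \<alpha>" using a(2) by (simp add: prefix_length_le)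
  moreover have "\<forall>p<length \<gamma>. \<gamma>!p < dc_t n (k-p-1) + 1"
  proof (intro allI impI)
    fix p assume p: "p < length \<gamma>"
    then have "p < k - 1" "\<alpha> ! p = \<gamma> ! p" using a \<open>length \<gamma> \<le> length \<alpha>\<close> prefix_nth_eq[OF a(2)]
      by (auto simp: dc_A_def)
    then show "\<gamma>!p < dc_t n (k-p-1) + 1" using a(1) by (auto simp: dc_A_def)
  qed
  ultimately show "length \<gamma> \<le> k - 1 \<and> (\<forall>p<length \<gamma>. \<gamma>!p < dc_t n (k-p-1) + 1)"
    using a by (auto simp: dc_A_def)
next
  assume "length \<gamma> \<le> k - 1 \<and> (\<forall>p<length \<gamma>. \<gamma>!p < dc_t n (k-p-1) + 1)"
  then show "\<exists>\<alpha>\<in>dc_A n k. prefix \<gamma> \<alpha>" using zext_in zext_prefix by blast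
qed

lemma finite_A: "finite (dc_A n k)"
proof (rule finite_subset)
  show "dc_A n k \<subseteq> {xs. set xs \<subseteq> {..<dc_t n k + 1} \<and> length xs = k - 1}"
  proof
    fix xs assume "xs \<in> dc_A n k"
    then have "length xs = k - 1" "\<forall>p<k-1. xs ! p < dc_t n (k-p-1) + 1" by (auto simp: dc_A_def)
    moreover have "\<forall>p. dc_t n (k-p-1) \<le> dc_t n k" by (simp add: dc_t_mono)
    ultimately show "xs \<in> {xs. set xs \<subseteq> {..<dc_t n k + 1} \<and> length xs = k - 1}"
      by (smt (verit, ccfv_SIG) in_set_conv_nth le_trans lessThan_iff less_Suc_eq_le mem_Collect_eq subsetI Suc_eq_plus1)
  qed
  show "finite {xs. set xs \<subseteq> {..<dc_t n k + 1} \<and> length xs = k - 1}"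
    by (rule finite_lists_length_eq) simp
qed



definition linv :: "nat \<Rightarrow> nat \<Rightarrow> nat list set \<Rightarrow> nat list \<Rightarrow> bool" where
"linv n k S \<beta> \<longleftrightarrow> (\<forall>c c'. c' < c \<longrightarrow> \<not>tup_empty S (\<beta>@[c]) \<longrightarrow> \<not>tup_empty S (\<beta>@[c'])) \<and>
   (\<forall>c. \<not>tup_empty S (\<beta>@[c]) \<longrightarrow> zext k (\<beta>@[c]) \<in> S) \<and>
   (\<forall>c m. c < m \<longrightarrow> dc_t n 1 < m \<longrightarrow> \<not>tup_empty S (\<beta>@[m]) \<longrightarrow> tup_full n k S (\<beta>@[c]))"

definition dinv :: "nat \<Rightarrow> nat \<Rightarrow> nat list set \<Rightarrow> bool" where
"dinv n k S \<longleftrightarrow> S \<subseteq> dc_A n k \<and> (\<forall>\<beta>. linv n k S \<beta>)"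

lemma full_mono: "tup_full n k S \<gamma> \<Longrightarrow> S \<subseteq> S' \<Longrightarrow> tup_full n k S' \<gamma>"
  by (auto simp: tup_full_def)

lemma ne_insert: "(\<not> tup_empty (insert x S) \<gamma>) \<longleftrightarrow> (\<not> tup_empty S \<gamma>) \<or> prefix \<gamma> x"
  by (auto simp: tup_empty_def)

lemma full_insert: "\<not> prefix \<gamma> x \<Longrightarrow> tup_full n k (insert x S) \<gamma> \<longleftrightarrow> tup_full n k S \<gamma>"
  by (auto simp: tup_full_def)

lemma prefix_snoc_trans: "prefix (\<gamma>@[c]) x \<Longrightarrow> prefix \<gamma> x"
  by (simp add: prefix_def) blast

lemma linv_irrel:
  assumes "\<not> prefix \<gamma> x"
  shows "linv n k (insert x S) \<gamma> \<longleftrightarrow> linv n k S \<gamma>"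
proof -
  have a: "\<not> prefix (\<gamma>@[c]) x" for c
    using assms prefix_snoc_trans[of \<gamma> c x] by auto
  have b: "zext k (\<gamma>@[c]) \<noteq> x" for c
  proof
    assume "zext k (\<gamma>@[c]) = x"
    then have "prefix (\<gamma>@[c]) x" using zext_prefix[of "\<gamma>@[c]" k] by simp
    then show False using a[of c] by simp
  qed
  have c: "\<And>c. tup_full n k (insert x S) (\<gamma>@[c]) \<longleftrightarrow> tup_full n k S (\<gamma>@[c])"
    using full_insert[OF a] .
  have d: "\<And>c. zext k (\<gamma>@[c]) \<in> insert x S \<longleftrightarrow> zext k (\<gamma>@[c]) \<in> S" using b by simp
  have e: "tup_empty (insert x S) (\<gamma>@[c]) \<longleftrightarrow> tup_empty S (\<gamma>@[c])" for c
    using ne_insert[of x S "\<gamma>@[c]"] a[of c] by simp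
  show ?thesis by (simp only: linv_def e c d)
qed

lemma empty_long:
  assumes "S \<subseteq> dc_A n k" "length \<gamma> > k - 1"
  shows "tup_empty S \<gamma>"
  using assms by (auto simp: tup_empty_def dc_A_def dest!: prefix_length_le)

lemma linv_long:
  assumes "S \<subseteq> dc_A n k" "length \<gamma> \<ge> k - 1"
  shows "linv n k S \<gamma>"
proof -
  have "\<And>c. tup_empty S (\<gamma>@[c])" using empty_long[OF assms(1)] assms(2) by simp
  then show ?thesis unfolding linv_def by blast
qed

lemma empty_out:
  assumes "S \<subseteq> dc_A n k" "\<not> (\<exists>\<alpha>\<in>dc_A n k. prefix \<gamma> \<alpha>)"
  shows "tup_empty S \<gamma>"
  using assms by (auto simp: tup_empty_def)

lemma prefix_snoc_nth: "prefix (\<beta>@[d]) x \<Longrightarrow> x ! length \<beta> = d"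
  by (auto simp: prefix_def nth_append)

lemma prefix_child:
  assumes "prefix \<beta> \<gamma>" "\<gamma> \<noteq> \<beta>" "prefix \<gamma> x" "prefix (\<beta>@[c]) x"
  shows "prefix (\<beta>@[c]) \<gamma>"
proof -
  obtain zs where g: "\<gamma> = \<beta> @ zs" using assms(1) by (auto simp: prefix_def)
  with assms(2) obtain d zs' where "zs = d # zs'" by (cases zs) auto
  then have "prefix (\<beta>@[d]) \<gamma>" using g by simp
  then have "prefix (\<beta>@[d]) x" using assms(3) by (rule prefix_order.trans)
  then have "x ! length \<beta> = d" "x ! length \<beta> = c"
    using assms(4) prefix_snoc_nth[of \<beta> d x] prefix_snoc_nth[of \<beta> c x] by simp_all
  then have "d = c" by simp
  then show ?thesis using \<open>prefix (\<beta>@[d]) \<gamma>\<close> by simp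
qed

lemma linv_at:
  assumes I: "linv n k S \<beta>" and px: "prefix (\<beta>@[c]) x"
    and m0: "\<And>i. (\<not> tup_empty S (\<beta>@[i])) \<longleftrightarrow> i < m0" and cm: "c \<le> m0"
    and z: "c = m0 \<Longrightarrow> x = zext k (\<beta>@[c])"
    and f: "c = m0 \<Longrightarrow> dc_t n 1 < c \<Longrightarrow> \<forall>c0<c. tup_full n k S (\<beta>@[c0])"
  shows "linv n k (insert x S) \<beta>"
proof -
  have ne: "(\<not> tup_empty (insert x S) (\<beta>@[i])) \<longleftrightarrow> i < m0 \<or> i = c" for i
  proof -
    have "prefix (\<beta>@[i]) x \<longleftrightarrow> i = c"
      using px prefix_snoc_nth[of \<beta> i x] prefix_snoc_nth[of \<beta> c x] by auto
    then show ?thesis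
      using m0[of i] ne_insert[of x S "\<beta>@[i]"] by simp
  qed
  have I1: "zext k (\<beta>@[i]) \<in> S" if "i < m0" for i
    using I m0[of i] that unfolding linv_def by simp
  have I3: "tup_full n k S (\<beta>@[c0])" if "c0 < i" "dc_t n 1 < i" "i < m0" for c0 i
    using I m0[of i] that unfolding linv_def by simp
  have A: "i' < m0 \<or> i' = c" if "i' < i" "i < m0 \<or> i = c" for i i'
    using that cm by auto
  have B: "zext k (\<beta>@[i]) \<in> insert x S" if h: "i < m0 \<or> i = c" for i
  proof (cases "i < m0")
    case True then show ?thesis using I1 by simp
  next
    case False then have "i = c" "c = m0" using h cm by auto
    then show ?thesis using z by simp
  qed
  have C: "tup_full n k (insert x S) (\<beta>@[c0])"
    if h: "c0 < i" "dc_t n 1 < i" "i < m0 \<or> i = c" for c0 i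
  proof -
    have "tup_full n k S (\<beta>@[c0])"
    proof (cases "i < m0")
      case True then show ?thesis using I3 h by blast
    next
      case False then have "i = c" "c = m0" using h cm by auto
      then show ?thesis using f h by auto
    qed
    then show ?thesis by (rule full_mono) auto
  qed
  show ?thesis unfolding linv_def ne using A B C by blast
qed



lemma prefix_eq_len: "prefix \<gamma> \<alpha> \<Longrightarrow> length \<alpha> = length \<gamma> \<Longrightarrow> \<alpha> = \<gamma>"
  by (auto simp: prefix_def)

lemma child_inrange:
  assumes "length \<beta> < k - 1" "\<forall>p<length \<beta>. \<beta>!p < dc_t n (k-p-1) + 1"
  shows "(\<exists>\<alpha>\<in>dc_A n k. prefix (\<beta>@[i]) \<alpha>) \<longleftrightarrow> i < dc_t n (k - length \<beta> - 1) + 1"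
proof -
  have "(\<forall>p<length (\<beta>@[i]). (\<beta>@[i])!p < dc_t n (k-p-1) + 1) \<longleftrightarrow> i < dc_t n (k - length \<beta> - 1) + 1"
  proof
    assume "\<forall>p<length (\<beta>@[i]). (\<beta>@[i])!p < dc_t n (k-p-1) + 1"
    then have "(\<beta>@[i])!length \<beta> < dc_t n (k-length \<beta>-1) + 1"
      by (metis length_append_singleton lessI)
    then show "i < dc_t n (k - length \<beta> - 1) + 1" by simp
  next
    assume i: "i < dc_t n (k - length \<beta> - 1) + 1"
    show "\<forall>p<length (\<beta>@[i]). (\<beta>@[i])!p < dc_t n (k-p-1) + 1"
    proof (intro allI impI)
      fix p assume "p < length (\<beta>@[i])"
      then have "p < length \<beta> \<or> p = length \<beta>" by auto
      then show "(\<beta>@[i])!p < dc_t n (k-p-1) + 1"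
      proof
        assume "p < length \<beta>" then show ?thesis using assms(2) by (simp add: nth_append)
      next
        assume "p = length \<beta>" then show ?thesis using i by simp
      qed
    qed
  qed
  then show ?thesis unfolding inrange using assms(1) by simp
qed

lemma common:
  assumes D: "dinv n k S" and nf: "\<not> tup_full n k S \<beta>" and len: "length \<beta> \<le> k - 2" and k2: "2 \<le> k"
  shows "\<forall>p<length \<beta>. \<beta>!p < dc_t n (k-p-1) + 1"
    and "\<exists>a. a < dc_t n (k - length \<beta> - 1) + 1 \<and> \<not> tup_full n k S (\<beta>@[a])"
    and "\<And>i. (\<not> tup_empty S (\<beta>@[i])) \<longleftrightarrow> i < (LEAST i. tup_empty S (\<beta>@[i]))"
proof -
  have SA: "S \<subseteq> dc_A n k" using D by (simp add: dinv_def)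
  obtain \<alpha> where a: "\<alpha> \<in> dc_A n k" "prefix \<beta> \<alpha>" "\<alpha> \<notin> S" using nf by (auto simp: tup_full_def)
  then have ir: "length \<beta> \<le> k - 1 \<and> (\<forall>p<length \<beta>. \<beta>!p < dc_t n (k-p-1) + 1)"
    using inrange by blast
  then show br: "\<forall>p<length \<beta>. \<beta>!p < dc_t n (k-p-1) + 1" by simp
  have la: "length \<alpha> = k - 1" using a(1) by (simp add: dc_A_def)
  obtain zs where zs: "\<alpha> = \<beta> @ zs" using a(2) by (auto simp: prefix_def)
  then have "zs \<noteq> []" using la len k2 by auto
  then obtain b zs' where b: "zs = b # zs'" by (cases zs) auto
  have pb: "prefix (\<beta>@[b]) \<alpha>" using zs b by simp
  have "\<not> tup_full n k S (\<beta>@[b])" using pb a by (auto simp: tup_full_def)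
  moreover have "b < dc_t n (k - length \<beta> - 1) + 1"
  proof -
    have "\<exists>\<alpha>\<in>dc_A n k. prefix (\<beta>@[b]) \<alpha>" using pb a(1) by blast
    then show ?thesis using child_inrange[of \<beta> k n b] br len k2 by simp
  qed
  ultimately show "\<exists>a. a < dc_t n (k - length \<beta> - 1) + 1 \<and> \<not> tup_full n k S (\<beta>@[a])" by blast
  define B where "B = dc_t n k + 1"
  have "\<not> B < dc_t n (k - length \<beta> - 1) + 1" unfolding B_def using dc_t_mono[of "k - length \<beta> - 1" k n] by simp
  then have eB: "tup_empty S (\<beta>@[B])"
    using child_inrange[of \<beta> k n B] br len k2 empty_out[OF SA] by simp
  define m0 where "m0 = (LEAST i. tup_empty S (\<beta>@[i]))"
  have em0: "tup_empty S (\<beta>@[m0])" unfolding m0_def using eB by (rule LeastI)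
  have I1: "\<And>c c'. c' < c \<Longrightarrow> \<not>tup_empty S (\<beta>@[c]) \<Longrightarrow> \<not>tup_empty S (\<beta>@[c'])"
    using D unfolding dinv_def linv_def by blast
  show "(\<not> tup_empty S (\<beta>@[i])) \<longleftrightarrow> i < (LEAST i. tup_empty S (\<beta>@[i]))" for i
    unfolding m0_def[symmetric]
  proof
    assume h: "\<not> tup_empty S (\<beta>@[i])"
    show "i < m0"
    proof (rule ccontr)
      assume "\<not> i < m0"
      then have "m0 < i \<or> m0 = i" by auto
      then show False using I1[OF _ h, of m0] h em0 by auto
    qed
  next
    assume "i < m0" then show "\<not> tup_empty S (\<beta>@[i])" unfolding m0_def by (rule not_less_Least)
  qed
qed


lemma empty_child_empty: "tup_empty S \<beta> \<Longrightarrow> tup_empty S (\<beta>@[i])"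
  unfolding tup_empty_def using prefix_snoc_trans[of \<beta> i] by auto

lemma step:
  assumes D: "dinv n k S" and k2: "2 \<le> k"
  shows "length \<beta> + f = k - 2 \<Longrightarrow> \<not> tup_full n k S \<beta> \<Longrightarrow>
    \<exists>x. next_aux n k f \<beta> S = insert x S \<and> x \<in> dc_A n k \<and> x \<notin> S \<and> prefix \<beta> x \<and>
        (tup_empty S \<beta> \<longrightarrow> x = zext k \<beta>) \<and> (\<forall>\<gamma>. prefix \<beta> \<gamma> \<longrightarrow> linv n k (insert x S) \<gamma>)"
proof (induction f arbitrary: \<beta>)
  have SA: "S \<subseteq> dc_A n k" using D by (simp add: dinv_def)
  case 0
  note len = \<open>length \<beta> + 0 = k - 2\<close>
  note nf = \<open>\<not> tup_full n k S \<beta>\<close>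
  have br: "\<forall>p<length \<beta>. \<beta>!p < dc_t n (k-p-1) + 1" using common(1)[OF D nf _ k2] len by simp
  obtain a where a: "a < dc_t n (k - length \<beta> - 1) + 1" "\<not> tup_full n k S (\<beta>@[a])"
    using common(2)[OF D nf _ k2] len by auto
  define m0 where "m0 = (LEAST i. tup_empty S (\<beta>@[i]))"
  have m0c: "\<And>i. (\<not> tup_empty S (\<beta>@[i])) \<longleftrightarrow> i < m0" unfolding m0_def using common(3)[OF D nf _ k2] len by simp
  have kl: "k - length \<beta> - 1 = 1" using len k2 by simp
  have ea: "tup_empty S (\<beta>@[a])"
  proof -
    obtain \<alpha> where al: "\<alpha> \<in> dc_A n k" "prefix (\<beta>@[a]) \<alpha>" "\<alpha> \<notin> S" using a(2) by (auto simp: tup_full_def)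
    have "length \<alpha> = k - 1" using al(1) by (simp add: dc_A_def)
    then have "length \<alpha> = length (\<beta>@[a])" using len k2 by simp
    then have "\<alpha> = \<beta>@[a]" using al(2) prefix_eq_len by blast
    then have nin: "\<beta>@[a] \<notin> S" using al(3) by simp
    show ?thesis unfolding tup_empty_def
    proof
      assume "\<exists>\<alpha>\<in>S. prefix (\<beta> @ [a]) \<alpha>"
      then obtain \<alpha>' where "\<alpha>' \<in> S" "prefix (\<beta> @ [a]) \<alpha>'" by blast
      moreover then have "length \<alpha>' = k - 1" using SA by (auto simp: dc_A_def)
      ultimately show False using nin len k2 prefix_eq_len[of "\<beta>@[a]" \<alpha>'] by auto
    qed
  qed
  have "m0 \<le> a" using m0c[of a] ea by simp
  then have m0a: "m0 < dc_t n 1 + 1" using a(1) kl by simp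
  define x where "x = \<beta>@[m0]"
  have zx: "zext k x = x" unfolding zext_def x_def using len k2 by simp
  have nx: "next_aux n k 0 \<beta> S = insert x S" unfolding x_def m0_def by simp
  have xA: "x \<in> dc_A n k"
  proof -
    have "length x \<le> k - 1" unfolding x_def using len k2 by simp
    moreover have "\<forall>p<length x. x!p < dc_t n (k-p-1) + 1"
    proof (intro allI impI)
      fix p assume "p < length x"
      then have "p < length \<beta> \<or> p = length \<beta>" unfolding x_def by auto
      then show "x!p < dc_t n (k-p-1) + 1"
      proof
        assume "p < length \<beta>" then show ?thesis using br by (simp add: x_def nth_append)
      next
        assume "p = length \<beta>" then show ?thesis using m0a kl by (simp add: x_def)
      qed
    qed
    ultimately have "zext k x \<in> dc_A n k" by (rule zext_in)
    then show ?thesis using zx by simp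
  qed
  have xS: "x \<notin> S" using m0c[of m0] unfolding tup_empty_def x_def by auto
  have emp: "tup_empty S \<beta> \<longrightarrow> x = zext k \<beta>"
  proof
    assume "tup_empty S \<beta>"
    then have "tup_empty S (\<beta>@[0])" by (rule empty_child_empty)
    then have "m0 = 0" using m0c[of 0] by simp
    moreover have "k - 1 - length \<beta> = 1" using len k2 by simp
    ultimately show "x = zext k \<beta>" unfolding x_def zext_def by simp
  qed
  have SA': "insert x S \<subseteq> dc_A n k" using SA xA by simp
  have lin: "linv n k (insert x S) \<gamma>" if "prefix \<beta> \<gamma>" for \<gamma>
  proof (cases "\<gamma> = \<beta>")
    case True
    have "linv n k S \<beta>" using D by (simp add: dinv_def)
    then show ?thesis unfolding True
      by (rule linv_at[of n k S \<beta> m0 x m0]) (use m0c zx m0a in \<open>auto simp: x_def\<close>)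
  next
    case False
    then have "length \<beta> < length \<gamma>" using that prefix_length_less[of \<beta> \<gamma>] by simp
    then have "length \<gamma> \<ge> k - 1" using len k2 by simp
    then show ?thesis by (rule linv_long[OF SA'])
  qed
  have px: "prefix \<beta> x" by (simp add: x_def)
  show ?case using nx xA xS px emp lin by blast
next
  case (Suc f)
  have SA: "S \<subseteq> dc_A n k" using D by (simp add: dinv_def)
  note len = \<open>length \<beta> + Suc f = k - 2\<close>
  note nf = \<open>\<not> tup_full n k S \<beta>\<close>
  have len2: "length \<beta> \<le> k - 2" "length \<beta> < k - 2" using len by auto
  have br: "\<forall>p<length \<beta>. \<beta>!p < dc_t n (k-p-1) + 1" using common(1)[OF D nf len2(1) k2] .
  obtain a where a: "a < dc_t n (k - length \<beta> - 1) + 1" "\<not> tup_full n k S (\<beta>@[a])"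
    using common(2)[OF D nf len2(1) k2] by auto
  define m0 where "m0 = (LEAST i. tup_empty S (\<beta>@[i]))"
  have m0c: "\<And>i. (\<not> tup_empty S (\<beta>@[i])) \<longleftrightarrow> i < m0" unfolding m0_def using common(3)[OF D nf len2(1) k2] by simp
  define c where "c = (if m0 \<ge> dc_t n 1 + 1 then (LEAST i. \<not> tup_full n k S (\<beta>@[i])) else m0)"
  have nx: "next_aux n k (Suc f) \<beta> S = next_aux n k f (\<beta>@[c]) S"
    unfolding c_def m0_def by (simp add: Let_def)
  have t1: "dc_t n 1 \<le> dc_t n (k - length \<beta> - 1)" using len2 by (intro dc_t_mono) simp
  have cir: "(\<exists>\<alpha>\<in>dc_A n k. prefix (\<beta>@[i]) \<alpha>) \<longleftrightarrow> i < dc_t n (k - length \<beta> - 1) + 1" for i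
    using child_inrange[of \<beta> k n i] len2 br by simp
  have ncf: "\<not> tup_full n k S (\<beta>@[c])"
  proof (cases "m0 \<ge> dc_t n 1 + 1")
    case True
    then have "c = (LEAST i. \<not> tup_full n k S (\<beta>@[i]))" unfolding c_def by simp
    then show ?thesis using LeastI[of "\<lambda>i. \<not> tup_full n k S (\<beta>@[i])" a] a(2) by simp
  next
    case False
    then have cm: "c = m0" unfolding c_def by simp
    have "m0 < dc_t n (k - length \<beta> - 1) + 1" using False t1 by simp
    then obtain \<alpha> where al: "\<alpha> \<in> dc_A n k" "prefix (\<beta>@[m0]) \<alpha>" using cir by blast
    have "\<alpha> \<notin> S" using al(2) m0c[of m0] unfolding tup_empty_def by auto
    then show ?thesis using al cm unfolding tup_full_def by auto
  qed
  have "length (\<beta>@[c]) + f = k - 2" using len by simp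
  then obtain x where x: "next_aux n k f (\<beta>@[c]) S = insert x S" "x \<in> dc_A n k" "x \<notin> S"
      "prefix (\<beta>@[c]) x" "tup_empty S (\<beta>@[c]) \<longrightarrow> x = zext k (\<beta>@[c])"
      "\<And>\<gamma>. prefix (\<beta>@[c]) \<gamma> \<Longrightarrow> linv n k (insert x S) \<gamma>"
    using Suc.IH[OF _ ncf] by blast
  have px: "prefix \<beta> x" using x(4) by (rule prefix_snoc_trans)
  have emp: "tup_empty S \<beta> \<longrightarrow> x = zext k \<beta>"
  proof
    assume "tup_empty S \<beta>"
    then have "tup_empty S (\<beta>@[0])" by (rule empty_child_empty)
    then have "m0 = 0" using m0c[of 0] by simp
    then have c0: "c = 0" unfolding c_def by simp
    then have "x = zext k (\<beta>@[0])" using x(5) \<open>tup_empty S (\<beta>@[0])\<close> by simp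
    moreover have "k - 1 - length \<beta> = Suc (k - 1 - length (\<beta>@[0]))" using len2 by simp
    ultimately show "x = zext k \<beta>" unfolding zext_def by (simp add: replicate_Suc)
  qed
  have cle: "c \<le> m0"
  proof (cases "m0 \<ge> dc_t n 1 + 1")
    case False then show ?thesis unfolding c_def by simp
  next
    case True
    then have cL: "c = (LEAST i. \<not> tup_full n k S (\<beta>@[i]))" unfolding c_def by simp
    show ?thesis
    proof (rule ccontr)
      assume "\<not> c \<le> m0"
      then have "m0 < c" by simp
      then have fm: "tup_full n k S (\<beta>@[m0])" unfolding cL using not_less_Least by blast
      have em: "tup_empty S (\<beta>@[m0])" using m0c[of m0] by simp
      have "\<not> (\<exists>\<alpha>\<in>dc_A n k. prefix (\<beta>@[m0]) \<alpha>)"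
        using fm em unfolding tup_full_def tup_empty_def by blast
      then have "\<not> m0 < dc_t n (k - length \<beta> - 1) + 1" using cir by blast
      then have "\<not> (\<exists>\<alpha>\<in>dc_A n k. prefix (\<beta>@[c]) \<alpha>)" using cir \<open>m0 < c\<close> by simp
      then have "tup_full n k S (\<beta>@[c])" unfolding tup_full_def by blast
      then show False using ncf by simp
    qed
  qed
  have lin: "linv n k (insert x S) \<gamma>" if pg: "prefix \<beta> \<gamma>" for \<gamma>
  proof (cases "\<gamma> = \<beta>")
    case True
    have Lb: "linv n k S \<beta>" using D by (simp add: dinv_def)
    have z: "x = zext k (\<beta>@[c])" if "c = m0"
      using x(5) m0c[of m0] that by simp
    have f: "\<forall>c0<c. tup_full n k S (\<beta>@[c0])" if "c = m0" "dc_t n 1 < c"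
    proof -
      have "m0 \<ge> dc_t n 1 + 1" using that by simp
      then have cL: "c = (LEAST i. \<not> tup_full n k S (\<beta>@[i]))" unfolding c_def by simp
      show ?thesis unfolding cL using not_less_Least by blast
    qed
    show ?thesis unfolding True
      by (rule linv_at[of n k S \<beta> c x m0, OF Lb x(4) m0c cle z f])
  next
    case False
    show ?thesis
    proof (cases "prefix \<gamma> x")
      case True
      have "prefix (\<beta>@[c]) \<gamma>" by (rule prefix_child[OF pg False True x(4)])
      then show ?thesis by (rule x(6))
    next
      case False
      have "linv n k S \<gamma>" using D by (simp add: dinv_def)
      then show ?thesis using linv_irrel[OF False] by simp
    qed
  qed
  have nx2: "next_aux n k (Suc f) \<beta> S = insert x S" using nx x(1) by (rule trans)
  show ?case using nx2 x(2,3) px emp lin by blast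
qed



lemma phi_inv:
  assumes k2: "2 \<le> k"
  shows "d \<le> card (dc_A n k) \<Longrightarrow> dinv n k (dc_phi n k d) \<and> card (dc_phi n k d) = d"
proof (induction d)
  case 0
  have "linv n k {} \<beta>" for \<beta> unfolding linv_def tup_empty_def by simp
  then show ?case by (simp add: dc_phi_def dinv_def)
next
  case (Suc d)
  define S where "S = dc_phi n k d"
  have D: "dinv n k S" and cS: "card S = d" using Suc by (auto simp: S_def)
  have SA: "S \<subseteq> dc_A n k" using D by (simp add: dinv_def)
  have fS: "finite S" using finite_subset[OF SA finite_A] .
  have nf: "\<not> tup_full n k S []"
  proof
    assume "tup_full n k S []"
    then have "dc_A n k \<subseteq> S" unfolding tup_full_def by auto
    then have "card (dc_A n k) \<le> card S" using fS by (simp add: card_mono)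
    then show False using cS Suc.prems by simp
  qed
  have "length ([]::nat list) + (k - 2) = k - 2" by simp
  from step[OF D k2 this nf] obtain x where x: "next_aux n k (k-2) [] S = insert x S" "x \<in> dc_A n k" "x \<notin> S"
     "\<forall>\<gamma>. prefix [] \<gamma> \<longrightarrow> linv n k (insert x S) \<gamma>" by blast
  have "dc_phi n k (Suc d) = dc_next n k S" unfolding dc_phi_def S_def by simp
  then have ph: "dc_phi n k (Suc d) = insert x S" using x(1) by (simp add: dc_next_def)
  have "dinv n k (insert x S)" using x SA unfolding dinv_def by simp
  moreover have "card (insert x S) = Suc d" using fS x(3) cS by simp
  ultimately show ?case using ph by simp
qed

lemma repr_full:
  "v < dc_t n l \<Longrightarrow> \<exists>f. f 0 < n \<and> (\<forall>j. 1 \<le> j \<and> j \<le> l \<longrightarrow> f j \<le> dc_t n (j-1)) \<and>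
      f 0 + (\<Sum>j=1..l. f j * dc_t n (j-1)) = v"
proof (induction l arbitrary: v)
  case 0 then show ?case by (intro exI[of _ "\<lambda>_. v"]) simp
next
  case (Suc l)
  define T where "T = dc_t n l"
  have vT: "v < T * (T + 1)" using Suc.prems by (simp add: T_def)
  then have T0: "T > 0" by (cases T) auto
  define q where "q = v div T"
  define r where "r = v mod T"
  have rT: "r < dc_t n l" using T0 by (simp add: r_def T_def[symmetric])
  have qT: "q \<le> T" unfolding q_def using vT T0
    by (metis less_Suc_eq_le Suc_eq_plus1 less_mult_imp_div_less mult.commute)
  obtain g where g: "g 0 < n" "\<forall>j. 1 \<le> j \<and> j \<le> l \<longrightarrow> g j \<le> dc_t n (j-1)"
      "g 0 + (\<Sum>j=1..l. g j * dc_t n (j-1)) = r" using Suc.IH[OF rT] by blast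
  define f where "f = g(Suc l := q)"
  have s: "(\<Sum>j=1..Suc l. f j * dc_t n (j-1)) = (\<Sum>j=1..l. g j * dc_t n (j-1)) + q * T"
  proof -
    have "(\<Sum>j=1..Suc l. f j * dc_t n (j-1)) = (\<Sum>j=1..l. f j * dc_t n (j-1)) + f (Suc l) * dc_t n l"
      by simp
    moreover have "(\<Sum>j=1..l. f j * dc_t n (j-1)) = (\<Sum>j=1..l. g j * dc_t n (j-1))"
      by (rule sum.cong) (auto simp: f_def)
    ultimately show ?thesis by (simp add: f_def T_def)
  qed
  have "f 0 = g 0" by (simp add: f_def)
  then have "f 0 + (\<Sum>j=1..Suc l. f j * dc_t n (j-1)) = r + q * T" using s g(3) by simp
  also have "\<dots> = v" unfolding q_def r_def by simp
  finally have e: "f 0 + (\<Sum>j=1..Suc l. f j * dc_t n (j-1)) = v" .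
  have b: "\<forall>j. 1 \<le> j \<and> j \<le> Suc l \<longrightarrow> f j \<le> dc_t n (j-1)"
    using g(2) qT by (auto simp: f_def T_def le_Suc_eq)
  show ?case using e b g(1) by (intro exI[of _ f]) (simp add: f_def)
qed

lemma repr_zero:
  assumes "1 \<le> l" "0 < n" "v < dc_t n 1"
  shows "\<exists>f. f 0 < n \<and> (\<forall>j. 1 \<le> j \<and> j \<le> l \<longrightarrow> f j \<le> dc_t n (j-1)) \<and>
      f 0 + (\<Sum>j=1..l. f j * dc_t n (j-1)) = v \<and> (\<forall>j\<ge>2. f j = 0)"
proof -
  define f where "f = (\<lambda>j::nat. if j = 0 then v mod n else if j = 1 then v div n else 0)"
  have v: "v < n * (n + 1)" using assms(3) by simp
  have q: "v div n \<le> n" using v assms(2)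
    by (metis less_Suc_eq_le Suc_eq_plus1 less_mult_imp_div_less mult.commute)
  have b: "\<forall>j. 1 \<le> j \<and> j \<le> l \<longrightarrow> f j \<le> dc_t n (j-1)"
    using q by (auto simp: f_def)
  have "(\<Sum>j=1..l. f j * dc_t n (j-1)) = (\<Sum>j\<in>{1}. f j * dc_t n (j-1))"
    by (rule sum.mono_neutral_right) (use assms(1) in \<open>auto simp: f_def\<close>)
  then have "(\<Sum>j=1..l. f j * dc_t n (j-1)) = v div n * n" by (simp add: f_def)
  then have e: "f 0 + (\<Sum>j=1..l. f j * dc_t n (j-1)) = v" by (simp add: f_def)
  show ?thesis using b e assms(2) by (intro exI[of _ f]) (auto simp: f_def)
qed



lemma has_vertex:
  assumes n2: "2 \<le> n" and l1: "1 \<le> l" and lk: "l + 2 \<le> k"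
    and lg: "length \<gamma> = k - l"
    and gr: "\<forall>p<length \<gamma>. \<gamma>!p < dc_t n (k-p-1) + 1"
    and f0: "f 0 < n" and fb: "\<forall>j. 1 \<le> j \<and> j \<le> l \<longrightarrow> f j \<le> dc_t n (j-1)"
    and fv: "f 0 + (\<Sum>j=1..l. f j * dc_t n (j-1)) = v"
    and mem: "((\<forall>j. 2 \<le> j \<longrightarrow> f j = 0) \<and> zext k \<gamma> \<in> dc_phi n k d) \<or> tup_full n k (dc_phi n k d) \<gamma>"
  shows "\<exists>u\<in>sub_vertices n k d \<gamma>. dc_uid n l u = v \<and> (\<forall>j>l. u j = (if j \<le> k then \<gamma>!(k-j) else 0))"
proof -
  define u where "u = (\<lambda>j. if j \<le> l then f j else if j \<le> k then \<gamma>!(k-j) else 0)"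
  have vx: "dc_vertex n k u"
    unfolding dc_vertex_def
  proof (intro conjI ballI allI impI)
    show "u 0 < n" using f0 by (simp add: u_def)
  next
    fix j assume j: "j \<in> {1..k}"
    show "u j \<le> dc_t n (j - 1)"
    proof (cases "j \<le> l")
      case True then show ?thesis using fb j by (simp add: u_def)
    next
      case False
      then have "k - j < length \<gamma>" using lg j by simp
      then have "\<gamma>!(k-j) < dc_t n (k-(k-j)-1) + 1" using gr by blast
      moreover have "k-(k-j)-1 = j - 1" using j by simp
      ultimately show ?thesis using False j by (simp add: u_def)
    qed
  next
    fix j assume "k < j" then show "u j = 0" using lk by (simp add: u_def)
  qed
  define t where "t = dc_tuple k u"
  have tl: "length t = k - 1" by (simp add: t_def dc_tuple_def)
  have tn: "t ! p = u (k - p)" if "p < k - 1" for p using that by (simp add: t_def dc_tuple_def)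
  have kk: "k - 1 = (k - l) + (l - 1)" using lk l1 by simp
  have split: "[0..<k-1] = [0..<k-l] @ [k-l..<k-1]"
    unfolding kk by (rule upt_add_eq_append) simp
  have gmap: "map (\<lambda>p. u (k-p)) [0..<k-l] = \<gamma>"
  proof (rule nth_equalityI)
    show "length (map (\<lambda>p. u (k-p)) [0..<k-l]) = length \<gamma>" using lg by simp
  next
    fix p assume "p < length (map (\<lambda>p. u (k-p)) [0..<k-l])"
    then have p: "p < k - l" by simp
    then have "\<not> k - p \<le> l" "k - p \<le> k" "k - (k - p) = p" by auto
    then show "map (\<lambda>p. u (k-p)) [0..<k-l] ! p = \<gamma> ! p" using p by (simp add: u_def)
  qed
  define r where "r = map (\<lambda>p. u (k-p)) [k-l..<k-1]"
  have teq: "t = \<gamma> @ r" unfolding t_def dc_tuple_def r_def split using gmap by simp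
  have rn: "r ! i = f (l - i)" if "i < l - 1" for i
  proof -
    have "r ! i = u (k - (k - l + i))" unfolding r_def using that lk by simp
    moreover have "k - (k - l + i) = l - i" using that lk by simp
    ultimately show ?thesis using that by (simp add: u_def)
  qed
  have rl: "length r = l - 1" unfolding r_def using lk by simp
  have sub: "\<gamma> = map (\<lambda>p. u (k - p)) [0..<length \<gamma>]" using gmap lg by simp
  have tS: "t \<in> dc_phi n k d"
    using mem
  proof
    assume h: "(\<forall>j. 2 \<le> j \<longrightarrow> f j = 0) \<and> zext k \<gamma> \<in> dc_phi n k d"
    have "r = replicate (k - 1 - length \<gamma>) 0"
    proof (rule nth_equalityI)
      show "length r = length (replicate (k - 1 - length \<gamma>) 0)" using rl lg lk by simp
    next
      fix i assume "i < length r"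
      then have i: "i < l - 1" using rl by simp
      then have "2 \<le> l - i" by simp
      then show "r ! i = replicate (k - 1 - length \<gamma>) 0 ! i" using h rn[OF i] i lg lk by simp
    qed
    then have "t = zext k \<gamma>" unfolding teq zext_def by simp
    then show ?thesis using h by simp
  next
    assume h: "tup_full n k (dc_phi n k d) \<gamma>"
    have "t \<in> dc_A n k" unfolding dc_A_def
    proof (intro CollectI conjI allI impI)
      show "length t = k - 1" by (rule tl)
    next
      fix p assume p: "p < k - 1"
      show "t ! p < dc_t n (k - p - 1) + 1"
      proof (cases "p < k - l")
        case True
        then have "t ! p = \<gamma> ! p" unfolding teq using lg by (simp add: nth_append)
        then show ?thesis using gr True lg by simp
      next
        case False
        then have "k - p \<le> l" "1 \<le> k - p" using p by auto
        then have "f (k - p) \<le> dc_t n (k - p - 1)" using fb by blast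
        then have "u (k - p) \<le> dc_t n (k - p - 1)" using \<open>k - p \<le> l\<close> by (simp add: u_def)
        then show ?thesis using tn[OF p] by simp
      qed
    qed
    moreover have "prefix \<gamma> t" unfolding teq by simp
    ultimately show ?thesis using h unfolding tup_full_def by blast
  qed
  have usub: "u \<in> sub_vertices n k d \<gamma>"
    unfolding sub_vertices_def pdc_vertices_def using vx tS sub by (simp add: t_def)
  have uid: "dc_uid n l u = v"
  proof -
    have "(\<Sum>j=1..l. u j * dc_t n (j-1)) = (\<Sum>j=1..l. f j * dc_t n (j-1))"
      by (rule sum.cong) (auto simp: u_def)
    then show ?thesis unfolding dc_uid_def using fv by (simp add: u_def)
  qed
  have "\<forall>j>l. u j = (if j \<le> k then \<gamma>!(k-j) else 0)" by (simp add: u_def)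
  then show ?thesis using usub uid by blast
qed



lemma sub_ne:
  assumes "x \<in> sub_vertices n k d \<gamma>" "length \<gamma> \<le> k - 1"
  shows "\<not> tup_empty (dc_phi n k d) \<gamma>"
proof -
  have t: "dc_tuple k x \<in> dc_phi n k d" and g: "\<gamma> = map (\<lambda>p. x (k - p)) [0..<length \<gamma>]"
    using assms(1) by (auto simp: sub_vertices_def pdc_vertices_def)
  have kk: "k - 1 = length \<gamma> + (k - 1 - length \<gamma>)" using assms(2) by simp
  have "[0..<length \<gamma> + (k - 1 - length \<gamma>)] = [0..<length \<gamma>] @ [length \<gamma>..<length \<gamma> + (k - 1 - length \<gamma>)]"
    by (rule upt_add_eq_append) simp
  then have "[0..<k-1] = [0..<length \<gamma>] @ [length \<gamma>..<k-1]" using kk[symmetric] by simp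
  then have "dc_tuple k x = \<gamma> @ map (\<lambda>p. x (k - p)) [length \<gamma>..<k-1]"
    unfolding dc_tuple_def using g by simp
  then have "prefix \<gamma> (dc_tuple k x)" by simp
  then show ?thesis using t unfolding tup_empty_def by blast
qed

lemma mk_edge:
  assumes lk: "l + 2 \<le> k" and la: "length \<alpha>' = k - (l + 1)" and ij: "i < j"
    and u: "u \<in> sub_vertices n k d (\<alpha>'@[i])" "dc_uid n l u = j - 1"
       "\<forall>j'>l. u j' = (if j' \<le> k then (\<alpha>'@[i])!(k-j') else 0)"
    and w: "w \<in> sub_vertices n k d (\<alpha>'@[j])" "dc_uid n l w = i"
       "\<forall>j'>l. w j' = (if j' \<le> k then (\<alpha>'@[j])!(k-j') else 0)"
  shows "linked n k d (\<alpha>'@[i]) (\<alpha>'@[j])"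
proof -
  have vu: "dc_vertex n k u" and vw: "dc_vertex n k w"
    using u(1) w(1) by (auto simp: sub_vertices_def pdc_vertices_def)
  have kl: "k - (l + 1) = length \<alpha>'" using la by simp
  have ul: "u (l+1) = i" using u(3) lk kl by simp
  have wl: "w (l+1) = j" using w(3) lk kl by simp
  have eq: "\<forall>i'>l+1. u i' = w i'"
  proof (intro allI impI)
    fix i' assume h: "l + 1 < i'"
    show "u i' = w i'"
    proof (cases "i' \<le> k")
      case True
      then have "k - i' < length \<alpha>'" using h la by simp
      then show ?thesis using u(3) w(3) h True by (simp add: nth_append)
    next
      case False then show ?thesis using u(3) w(3) h by simp
    qed
  qed
  have "dc_edge n k u w"
    unfolding dc_edge_def
  proof (intro conjI vu vw exI[of _ "l+1"])
    show "l + 1 \<le> k" using lk by simp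
    show "\<forall>i'>l + 1. u i' = w i'" by (rule eq)
    show "if l + 1 = 0 then u 0 \<noteq> w 0
          else u (l + 1) < w (l + 1) \<and> dc_uid n (l + 1 - 1) u = w (l + 1) - 1 \<and> dc_uid n (l + 1 - 1) w = u (l + 1) \<or>
               w (l + 1) < u (l + 1) \<and> dc_uid n (l + 1 - 1) w = u (l + 1) - 1 \<and> dc_uid n (l + 1 - 1) u = w (l + 1)"
      using ul wl ij u(2) w(2) by simp
  qed
  then show ?thesis unfolding linked_def using u(1) w(1) by blast
qed

theorem lemma8:
  fixes n k l d m :: nat and \<alpha>' :: "nat list"
  assumes "n \<ge> 2"
    and "3 \<le> l + 2" and "l + 2 \<le> k"
    and "d \<le> card (dc_A n k)"
    and "length \<alpha>' = k - (l + 1)"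
    and "sub_vertices n k d (\<alpha>' @ [m]) \<noteq> {}"
    and "\<forall>j>m. sub_vertices n k d (\<alpha>' @ [j]) = {}"
  shows "(\<forall>i j. i < j \<and> j < m \<longrightarrow> linked n k d (\<alpha>' @ [i]) (\<alpha>' @ [j]))
       \<and> min m (dc_t n 1) \<le> card {i. i \<noteq> m \<and> linked n k d (\<alpha>' @ [i]) (\<alpha>' @ [m])}"
proof -
  note n2 = assms(1) and lk = assms(3) and la = assms(5)
  have l1: "1 \<le> l" using assms(2) by simp
  have k2: "2 \<le> k" using lk by simp
  define S where "S = dc_phi n k d"
  have D: "dinv n k S" using phi_inv[OF k2 assms(4)] by (simp add: S_def)
  have SA: "S \<subseteq> dc_A n k" using D by (simp add: dinv_def)
  have L: "linv n k S \<alpha>'" using D by (simp add: dinv_def)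
  have lg: "length (\<alpha>'@[i]) = k - l" for i using la lk by simp
  have lg1: "length (\<alpha>'@[i]) \<le> k - 1" for i using lg l1 by simp
  have nem: "\<not> tup_empty S (\<alpha>'@[m])"
    using assms(6) sub_ne[OF _ lg1] unfolding S_def by blast
  have nei: "\<not> tup_empty S (\<alpha>'@[i])" if "i \<le> m" for i
  proof (cases "i = m")
    case True then show ?thesis using nem by simp
  next
    case False then have "i < m" using that by simp
    then show ?thesis using L nem unfolding linv_def by blast
  qed
  have rng: "\<forall>p<length (\<alpha>'@[i]). (\<alpha>'@[i])!p < dc_t n (k-p-1) + 1" if im: "i \<le> m" for i
  proof -
    obtain \<alpha> where "\<alpha> \<in> S" "prefix (\<alpha>'@[i]) \<alpha>" using nei[OF im] unfolding tup_empty_def by blast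
    then have "\<exists>\<alpha>\<in>dc_A n k. prefix (\<alpha>'@[i]) \<alpha>" using SA by blast
    then show ?thesis using inrange by blast
  qed
  have mle: "m \<le> dc_t n l"
  proof -
    have "length \<alpha>' < length (\<alpha>'@[m])" by simp
    then have "(\<alpha>'@[m])!length \<alpha>' < dc_t n (k - length \<alpha>' - 1) + 1" using rng[of m] by blast
    moreover have "k - length \<alpha>' - 1 = l" using la lk by simp
    ultimately show ?thesis by simp
  qed
  have zi: "zext k (\<alpha>'@[i]) \<in> S" if "i \<le> m" for i
    using L nei[OF that] unfolding linv_def by blast
  have fulli: "tup_full n k S (\<alpha>'@[i])" if "i < m" "dc_t n 1 < m" for i
    using L nem that unfolding linv_def by blast
  have t1l: "dc_t n 1 \<le> dc_t n l" using l1 by (rule dc_t_mono)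
  have V: "\<exists>u\<in>sub_vertices n k d (\<alpha>'@[i]). dc_uid n l u = v \<and>
             (\<forall>j>l. u j = (if j \<le> k then (\<alpha>'@[i])!(k-j) else 0))"
    if im: "i \<le> m" and vc: "v < dc_t n 1 \<or> (i < m \<and> dc_t n 1 < m \<and> v < dc_t n l)" for i v
  proof (cases "v < dc_t n 1")
    case True
    obtain f where f: "f 0 < n" "\<forall>j. 1 \<le> j \<and> j \<le> l \<longrightarrow> f j \<le> dc_t n (j-1)"
      "f 0 + (\<Sum>j=1..l. f j * dc_t n (j-1)) = v" "\<forall>j\<ge>2. f j = 0"
      using repr_zero[OF l1 _ True] n2 by auto
    show ?thesis
      by (rule has_vertex[OF n2 l1 lk lg rng[OF im] f(1,2,3)]) (use f(4) zi[OF im] in \<open>simp add: S_def\<close>)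
  next
    case False
    then have h: "i < m" "dc_t n 1 < m" "v < dc_t n l" using vc by auto
    obtain f where f: "f 0 < n" "\<forall>j. 1 \<le> j \<and> j \<le> l \<longrightarrow> f j \<le> dc_t n (j-1)"
      "f 0 + (\<Sum>j=1..l. f j * dc_t n (j-1)) = v"
      using repr_full[OF h(3)] by auto
    show ?thesis
      by (rule has_vertex[OF n2 l1 lk lg rng[OF im] f(1,2,3)]) (use fulli[OF h(1,2)] in \<open>simp add: S_def\<close>)
  qed
  have P1: "linked n k d (\<alpha>' @ [i]) (\<alpha>' @ [j])" if h: "i < j" "j < m" for i j
  proof -
    have c1: "j - 1 < dc_t n 1 \<or> (i < m \<and> dc_t n 1 < m \<and> j - 1 < dc_t n l)" using h mle by auto
    have c2: "i < dc_t n 1 \<or> (j < m \<and> dc_t n 1 < m \<and> i < dc_t n l)" using h mle by auto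
    obtain u where u: "u\<in>sub_vertices n k d (\<alpha>'@[i])" "dc_uid n l u = j - 1"
        "\<forall>j'>l. u j' = (if j' \<le> k then (\<alpha>'@[i])!(k-j') else 0)"
      using V[of i "j - 1"] c1 h by auto
    obtain w where w: "w\<in>sub_vertices n k d (\<alpha>'@[j])" "dc_uid n l w = i"
        "\<forall>j'>l. w j' = (if j' \<le> k then (\<alpha>'@[j])!(k-j') else 0)"
      using V[of j i] c2 h by auto
    show ?thesis by (rule mk_edge[OF lk la h(1) u w])
  qed
  have P2: "linked n k d (\<alpha>' @ [i]) (\<alpha>' @ [m])" if h: "i < min m (dc_t n 1)" for i
  proof -
    have c1: "m - 1 < dc_t n 1 \<or> (i < m \<and> dc_t n 1 < m \<and> m - 1 < dc_t n l)" using h mle by auto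
    obtain u where u: "u\<in>sub_vertices n k d (\<alpha>'@[i])" "dc_uid n l u = m - 1"
        "\<forall>j'>l. u j' = (if j' \<le> k then (\<alpha>'@[i])!(k-j') else 0)"
      using V[of i "m - 1"] c1 h by auto
    obtain w where w: "w\<in>sub_vertices n k d (\<alpha>'@[m])" "dc_uid n l w = i"
        "\<forall>j'>l. w j' = (if j' \<le> k then (\<alpha>'@[m])!(k-j') else 0)"
      using V[of m i] h by auto
    have "i < m" using h by simp
    show ?thesis by (rule mk_edge[OF lk la \<open>i < m\<close> u w])
  qed
  have sub1: "{..<min m (dc_t n 1)} \<subseteq> {i. i \<noteq> m \<and> linked n k d (\<alpha>' @ [i]) (\<alpha>' @ [m])}"
    using P2 by auto
  have sub2: "{i. i \<noteq> m \<and> linked n k d (\<alpha>' @ [i]) (\<alpha>' @ [m])} \<subseteq> {..m}"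
  proof
    fix i assume "i \<in> {i. i \<noteq> m \<and> linked n k d (\<alpha>' @ [i]) (\<alpha>' @ [m])}"
    then have "sub_vertices n k d (\<alpha>' @ [i]) \<noteq> {}" unfolding linked_def by auto
    then show "i \<in> {..m}" using assms(7) by (auto simp: not_le[symmetric])
  qed
  have fin: "finite {i. i \<noteq> m \<and> linked n k d (\<alpha>' @ [i]) (\<alpha>' @ [m])}"
    using finite_subset[OF sub2] by simp
  have "card {..<min m (dc_t n 1)} \<le> card {i. i \<noteq> m \<and> linked n k d (\<alpha>' @ [i]) (\<alpha>' @ [m])}"
    by (rule card_mono[OF fin sub1])
  then show ?thesis using P1 by simp
qed

end
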